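(* Let $C$ be a Pauli-Square-Root Clifford and $P$ a Pauli, both acting on the same $t$ qubits. Then there is a $t$-qubit Pauli $Q$ such that $$C(P)\,(I\otimes C)=C(Q)\,(I\otimes C)\,C(P),$$ where the first tensor factor is a single control qubit; moreover $Q$ either commutes or anticommutes with $C$, and $\mathrm{Supp}(Q)\subseteq\mathrm{Supp}(C)$.
   Context: Paulis are tensor products of $I,X,Y,Z$ times a phase in $\{\pm1,\pm i\}$; a Clifford is a unitary mapping Paulis to Paulis under conjugation. A Pauli-Square-Root Clifford (PSC) is a Clifford that is not a Pauli and whose square is a Pauli. For a unitary $U$ on $t$ qubits, $C(U)=|0\rangle\langle0|\otimes I+|1\rangle\langle1|\otimes U$ on $1+t$ qubits (control first). $\mathrm{Supp}(W)$ denotes the set of qubits on which an operator $W$ acts nontrivially. *)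

theory Defs
  imports "Jordan_Normal_Form.Schur_Decomposition"
begin

text \<open>Operators on t qubits are complex matrices of dimension 2^t x 2^t.
  Qubit 0 is the first (most significant) tensor factor.\<close>

definition kron :: "complex mat \<Rightarrow> complex mat \<Rightarrow> complex mat" where
  "kron A B = mat (dim_row A * dim_row B) (dim_col A * dim_col B)
     (\<lambda>(i,j). A $$ (i div dim_row B, j div dim_col B) * B $$ (i mod dim_row B, j mod dim_col B))"

definition pI :: "complex mat" where "pI = mat_of_rows_list 2 [[1,0],[0,1]]"
definition pX :: "complex mat" where "pX = mat_of_rows_list 2 [[0,1],[1,0]]"
definition pY :: "complex mat" where "pY = mat_of_rows_list 2 [[0,-\<i>],[\<i>,0]]"
definition pZ :: "complex mat" where "pZ = mat_of_rows_list 2 [[1,0],[0,-1]]"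

definition pauli :: "nat \<Rightarrow> complex mat \<Rightarrow> bool" where
  "pauli t P \<longleftrightarrow> (\<exists>c ps. c \<in> {1, -1, \<i>, -\<i>} \<and> length ps = t \<and> set ps \<subseteq> {pI, pX, pY, pZ}
       \<and> P = c \<cdot>\<^sub>m foldr kron ps (1\<^sub>m 1))"

definition unitary_op :: "nat \<Rightarrow> complex mat \<Rightarrow> bool" where
  "unitary_op t U \<longleftrightarrow> U \<in> carrier_mat (2^t) (2^t) \<and> U * mat_adjoint U = 1\<^sub>m (2^t)"

definition clifford :: "nat \<Rightarrow> complex mat \<Rightarrow> bool" where
  "clifford t U \<longleftrightarrow> unitary_op t U \<and> (\<forall>P. pauli t P \<longrightarrow> pauli t (U * P * mat_adjoint U))"

definition psc :: "nat \<Rightarrow> complex mat \<Rightarrow> bool" where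
  "psc t C \<longleftrightarrow> clifford t C \<and> \<not> pauli t C \<and> pauli t (C * C)"

text \<open>Controlled-U on 1+t qubits, control first: |0><0| (x) I + |1><1| (x) U.\<close>
definition ctrl :: "nat \<Rightarrow> complex mat \<Rightarrow> complex mat" where
  "ctrl t U = four_block_mat (1\<^sub>m (2^t)) (0\<^sub>m (2^t) (2^t)) (0\<^sub>m (2^t) (2^t)) U"

text \<open>I (x) U on 1+t qubits (identity on the control qubit).\<close>
definition idtensor :: "nat \<Rightarrow> complex mat \<Rightarrow> complex mat" where
  "idtensor t U = four_block_mat U (0\<^sub>m (2^t) (2^t)) (0\<^sub>m (2^t) (2^t)) U"

text \<open>Bit of basis index a corresponding to qubit j (qubit 0 most significant),
  and the index with that bit deleted.\<close>
definition qbit :: "nat \<Rightarrow> nat \<Rightarrow> nat \<Rightarrow> nat" where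
  "qbit t j a = (a div 2^(t - 1 - j)) mod 2"
definition qdel :: "nat \<Rightarrow> nat \<Rightarrow> nat \<Rightarrow> nat" where
  "qdel t j a = (a div 2^(t - j)) * 2^(t - 1 - j) + a mod 2^(t - 1 - j)"

text \<open>W acts trivially on qubit j iff W = I_j (x) W' for some operator W' on the other qubits.\<close>
definition acts_trivially :: "nat \<Rightarrow> complex mat \<Rightarrow> nat \<Rightarrow> bool" where
  "acts_trivially t W j \<longleftrightarrow> (\<exists>W' :: complex mat. W' \<in> carrier_mat (2^(t-1)) (2^(t-1)) \<and>
     (\<forall>a < 2^t. \<forall>b < 2^t. W $$ (a,b) =
        (if qbit t j a = qbit t j b then W' $$ (qdel t j a, qdel t j b) else 0)))"

definition Supp :: "nat \<Rightarrow> complex mat \<Rightarrow> nat set" where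
  "Supp t W = {j. j < t \<and> \<not> acts_trivially t W j}"

end

theory Submission
  imports Defs
begin

lemma adj_dims[simp]: "dim_row (mat_adjoint A) = dim_col A" "dim_col (mat_adjoint A) = dim_row A"
  unfolding mat_adjoint_def by auto
lemma adj_index[simp]: "i < dim_col A \<Longrightarrow> j < dim_row A \<Longrightarrow> mat_adjoint A $$ (i,j) = cnj (A $$ (j,i))"
  unfolding mat_adjoint_def by (simp add: mat_of_rows_index)
lemma adj_carrier[simp]: "A \<in> carrier_mat n m \<Longrightarrow> mat_adjoint A \<in> carrier_mat m n"
  by (intro carrier_matI) auto
lemma adj_adj[simp]: "mat_adjoint (mat_adjoint A) = (A::complex mat)"
  by (rule eq_matI, auto)
lemma adj_mult: assumes "A \<in> carrier_mat n m" "B \<in> carrier_mat m k"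
  shows "mat_adjoint (A * B) = mat_adjoint B * (mat_adjoint (A::complex mat))"
proof (rule eq_matI)
  fix i j assume ij: "i < dim_row (mat_adjoint B * mat_adjoint A)" "j < dim_col (mat_adjoint B * mat_adjoint A)"
  then have i: "i < k" and j: "j < n" using assms by auto
  have "mat_adjoint (A * B) $$ (i, j) = cnj (\<Sum>l<m. A $$ (j,l) * B $$ (l,i))"
    using assms i j by (auto simp: scalar_prod_def lessThan_atLeast0)
  also have "\<dots> = (\<Sum>l<m. cnj (B $$ (l,i)) * cnj (A $$ (j,l)))"
    by (simp add: mult.commute)
  also have "\<dots> = (mat_adjoint B * mat_adjoint A) $$ (i,j)"
    using assms i j by (auto simp: scalar_prod_def lessThan_atLeast0)
  finally show "mat_adjoint (A * B) $$ (i, j) = (mat_adjoint B * mat_adjoint A) $$ (i, j)" .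
qed (use assms in auto)
lemma adj_smult: "mat_adjoint (c \<cdot>\<^sub>m A) = cnj c \<cdot>\<^sub>m mat_adjoint (A::complex mat)"
  by (rule eq_matI, auto)
lemma adj_one[simp]: "mat_adjoint (1\<^sub>m n :: complex mat) = 1\<^sub>m n"
  by (rule eq_matI, auto)

definition G :: "complex set" where "G = {1, -1, \<i>, -\<i>}"
lemma G_mult: "a \<in> G \<Longrightarrow> b \<in> G \<Longrightarrow> a * b \<in> G"
  by (auto simp: G_def)
lemma G_cnj: "a \<in> G \<Longrightarrow> cnj a \<in> G"
  by (auto simp: G_def)
lemma G_cnj_mult: "a \<in> G \<Longrightarrow> a * cnj a = 1"
  by (auto simp: G_def)
lemma G_cnj_mult': "a \<in> G \<Longrightarrow> cnj a * a = 1"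
  by (auto simp: G_def)
lemma G_cnj_sign: "a \<in> G \<Longrightarrow> \<exists>s\<in>{1,-1}. cnj a = s * a"
  by (auto simp: G_def)

definition m2 :: "complex \<Rightarrow> complex \<Rightarrow> complex \<Rightarrow> complex \<Rightarrow> complex mat" where
  "m2 a b c d = mat_of_rows_list 2 [[a,b],[c,d]]"
lemma m2_carrier[simp]: "m2 a b c d \<in> carrier_mat 2 2"
  by (auto simp: m2_def mat_of_rows_list_def)
lemma m2_dims[simp]: "dim_row (m2 a b c d) = 2" "dim_col (m2 a b c d) = 2"
  by (auto simp: m2_def mat_of_rows_list_def)
lemma less2: "(i::nat) < 2 \<longleftrightarrow> i = 0 \<or> i = 1" by auto
lemma m2_index: "m2 a b c d $$ (0,0) = a" "m2 a b c d $$ (0,1) = b" "m2 a b c d $$ (1,0) = c" "m2 a b c d $$ (1,1) = d"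
  by (auto simp: m2_def mat_of_rows_list_def)
lemma m2_index': "m2 a b c d $$ (0,Suc 0) = b" "m2 a b c d $$ (Suc 0,0) = c" "m2 a b c d $$ (Suc 0,Suc 0) = d"
  by (auto simp: m2_def mat_of_rows_list_def)
lemma lessSS: "(i::nat) < Suc (Suc 0) \<longleftrightarrow> i = 0 \<or> i = Suc 0" by auto
lemma m2_eq: "m2 a b c d = m2 a' b' c' d' \<longleftrightarrow> a = a' \<and> b = b' \<and> c = c' \<and> d = d'"
  apply (rule iffI)
   apply (metis m2_index)
  by simp
lemma m2_mult: "m2 a b c d * m2 e f g h = m2 (a*e+b*g) (a*f+b*h) (c*e+d*g) (c*f+d*h)"
  apply (rule eq_matI)
  by (auto simp: less2 scalar_prod_def m2_index m2_index' lessSS numeral_2_eq_2 lessThan_atLeast0[symmetric] lessThan_Suc)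
lemma m2_smult: "x \<cdot>\<^sub>m m2 a b c d = m2 (x*a) (x*b) (x*c) (x*d)"
  by (rule eq_matI) (auto simp: less2 m2_index m2_index')
lemma m2_adj: "mat_adjoint (m2 a b c d) = m2 (cnj a) (cnj c) (cnj b) (cnj d)"
  by (rule eq_matI) (auto simp: less2 m2_index m2_index')
lemma m2_one: "1\<^sub>m 2 = m2 1 0 0 1"
  by (rule eq_matI) (auto simp: less2 m2_index m2_index')
lemma m2_uminus: "- m2 a b c d = m2 (-a) (-b) (-c) (-d)"
  by (rule eq_matI) (auto simp: less2 m2_index m2_index')

lemma paulis_m2: "pI = m2 1 0 0 1" "pX = m2 0 1 1 0" "pY = m2 0 (-\<i>) \<i> 0" "pZ = m2 1 0 0 (-1)"
  by (auto simp: pI_def pX_def pY_def pZ_def m2_def)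

definition S :: "complex mat set" where "S = {pI, pX, pY, pZ}"

lemma S_carrier: "a \<in> S \<Longrightarrow> a \<in> carrier_mat 2 2"
  by (auto simp: S_def paulis_m2)
lemma S_adj: "a \<in> S \<Longrightarrow> mat_adjoint a = a"
  by (auto simp: S_def paulis_m2 m2_adj)
lemma S_sq: "a \<in> S \<Longrightarrow> a * a = 1\<^sub>m 2"
  by (auto simp: S_def paulis_m2 m2_mult m2_one)
lemma S_mult: assumes "a \<in> S" "b \<in> S" shows "\<exists>c\<in>G. \<exists>d\<in>S. a * b = c \<cdot>\<^sub>m d"
  using assms unfolding S_def G_def
  apply (elim insertE emptyE)
  apply (simp_all only: paulis_m2 m2_mult m2_smult)
  apply (simp_all add: m2_eq m2_smult)
  done
lemma S_comm: assumes "a \<in> S" "b \<in> S" shows "\<exists>s\<in>{1,-1}. a * b = s \<cdot>\<^sub>m (b * a)"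
  using assms unfolding S_def
  apply (elim insertE emptyE)
  apply (simp_all only: paulis_m2 m2_mult m2_smult)
  apply (simp_all add: m2_eq m2_smult)
  done

section \<open>Kronecker\<close>
lemma kron_dims[simp]: "dim_row (kron A B) = dim_row A * dim_row B" "dim_col (kron A B) = dim_col A * dim_col B"
  unfolding kron_def by auto
lemma kron_carrier: "A \<in> carrier_mat n n' \<Longrightarrow> B \<in> carrier_mat m m' \<Longrightarrow> kron A B \<in> carrier_mat (n*m) (n'*m')"
  by (intro carrier_matI) auto
lemma kron_index: "i < dim_row A * dim_row B \<Longrightarrow> j < dim_col A * dim_col B \<Longrightarrow>
   kron A B $$ (i,j) = A $$ (i div dim_row B, j div dim_col B) * B $$ (i mod dim_row B, j mod dim_col B)"
  unfolding kron_def by simp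

lemma sum_split: "(\<Sum>c<n*m. f c) = (\<Sum>x<n. \<Sum>y<m. f (x*m+y))" for f :: "nat \<Rightarrow> 'a::comm_monoid_add"
proof -
  have "(\<Sum>c<n*m. f c) = (\<Sum>x<n. sum f {x*m..<x*m+m})"
    by (rule sum.nat_group[symmetric])
  also have "\<dots> = (\<Sum>x<n. \<Sum>y<m. f (x*m+y))"
  proof (rule sum.cong[OF refl])
    fix x
    show "sum f {x*m..<x*m+m} = (\<Sum>y<m. f (x*m+y))"
      using sum.shift_bounds_nat_ivl[of f 0 "x*m" m] by (simp add: add.commute lessThan_atLeast0)
  qed
  finally show ?thesis .
qed

lemma div_lt: "(i::nat) < a * b \<Longrightarrow> i div b < a"
  by (simp add: less_mult_imp_div_less)
lemma mod_lt: "(i::nat) < a * b \<Longrightarrow> i mod b < b"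
  by (metis mod_less_divisor mult_zero_right not_gr_zero not_less_zero)

lemma kron_mult: assumes A: "A \<in> carrier_mat n n" and C: "C \<in> carrier_mat n n"
  and B: "B \<in> carrier_mat m m" and D: "D \<in> carrier_mat m m"
  shows "kron A B * kron C D = kron (A * C) (B * D)"
proof (rule eq_matI)
  fix i j assume "i < dim_row (kron (A * C) (B * D))" "j < dim_col (kron (A * C) (B * D))"
  then have i: "i < n*m" and j: "j < n*m" using A B C D by auto
  then have m: "m > 0" by (metis mult_zero_right not_gr_zero not_less_zero)
  have "(kron A B * kron C D) $$ (i,j) = (\<Sum>c<n*m. kron A B $$ (i,c) * kron C D $$ (c,j))"
    using i j A B C D by (simp add: scalar_prod_def lessThan_atLeast0)
  also have "\<dots> = (\<Sum>x<n. \<Sum>y<m. kron A B $$ (i,x*m+y) * kron C D $$ (x*m+y,j))"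
    by (rule sum_split)
  also have "\<dots> = (\<Sum>x<n. \<Sum>y<m. (A $$ (i div m, x) * C $$ (x, j div m)) * (B $$ (i mod m, y) * D $$ (y, j mod m)))"
  proof (intro sum.cong refl)
    fix x y assume x: "x \<in> {..<n}" and y: "y \<in> {..<m}"
    have "x*m+y < (x+1)*m" using y by simp
    also have "(x+1)*m \<le> n*m" using x by (intro mult_le_mono1) simp
    finally have xy: "x*m+y < n*m" .
    have d: "(x*m+y) div m = x" "(x*m+y) mod m = y" "y mod m = y" using y m by auto
    show "kron A B $$ (i,x*m+y) * kron C D $$ (x*m+y,j) = (A $$ (i div m, x) * C $$ (x, j div m)) * (B $$ (i mod m, y) * D $$ (y, j mod m))"
      using i j xy A B C D by (simp add: kron_index d)
  qed
  also have "\<dots> = (\<Sum>x<n. A $$ (i div m, x) * C $$ (x, j div m)) * (\<Sum>y<m. B $$ (i mod m, y) * D $$ (y, j mod m))"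
    by (simp add: sum_product)
  also have "\<dots> = kron (A * C) (B * D) $$ (i,j)"
    using i j A B C D by (simp add: kron_index scalar_prod_def lessThan_atLeast0 div_lt mod_lt)
  finally show "(kron A B * kron C D) $$ (i,j) = kron (A * C) (B * D) $$ (i,j)" .
qed (use A B C D in auto)

lemma kron_smult_l: "kron (c \<cdot>\<^sub>m A) B = c \<cdot>\<^sub>m kron A B"
  by (rule eq_matI) (auto simp: kron_index div_lt mod_lt)
lemma kron_smult_r: "kron A (c \<cdot>\<^sub>m B) = c \<cdot>\<^sub>m kron A B"
  by (rule eq_matI) (auto simp: kron_index div_lt mod_lt)
lemma kron_adj: "mat_adjoint (kron A B) = kron (mat_adjoint A) (mat_adjoint B)"
  by (rule eq_matI) (auto simp: kron_index div_lt mod_lt)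
lemma kron_one: "kron (1\<^sub>m n) (1\<^sub>m m) = 1\<^sub>m (n*m)"
proof (rule eq_matI)
  fix i j assume "i < dim_row (1\<^sub>m (n*m) :: complex mat)" "j < dim_col (1\<^sub>m (n*m) :: complex mat)"
  then have i: "i < n*m" and j: "j < n*m" by auto
  have "(i div m = j div m \<and> i mod m = j mod m) \<longleftrightarrow> i = j"
    by (metis div_mult_mod_eq)
  then show "kron (1\<^sub>m n) (1\<^sub>m m) $$ (i,j) = 1\<^sub>m (n*m) $$ (i,j)"
    using i j by (auto simp: kron_index div_lt mod_lt)
qed auto
lemma kron_one_left: "kron (1\<^sub>m 1) B = B"
proof (rule eq_matI)
  fix i j assume "i < dim_row B" "j < dim_col B"
  then show "kron (1\<^sub>m 1) B $$ (i,j) = B $$ (i,j)"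
    by (simp add: kron_index)
qed auto
lemma kron_assoc: "kron (kron A B) C = kron A (kron B C)"
proof (rule eq_matI)
  fix i j assume "i < dim_row (kron A (kron B C))" "j < dim_col (kron A (kron B C))"
  then have i: "i < dim_row A * (dim_row B * dim_row C)" and j: "j < dim_col A * (dim_col B * dim_col C)" by auto
  have e1: "x div c div b = x div (b * c)" for x b c :: nat by (metis div_mult2_eq mult.commute)
  have e2: "x div c mod b = x mod (b * c) div c" for x b c :: nat
  proof -
    have "x mod (b*c) = c*(x div c mod b) + x mod c" using mod_mult2_eq[of x c b] by (simp add: mult.commute)
    then show ?thesis by (cases "c=0") auto
  qed
  have e3: "x mod (b * c) mod c = x mod c" for x b c :: nat by (metis mod_mod_cancel dvd_triv_right)
  have i1: "i < dim_row A * dim_row B * dim_row C" and j1: "j < dim_col A * dim_col B * dim_col C"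
    using i j by (simp_all add: mult.assoc)
  have i2: "i mod (dim_row B * dim_row C) < dim_row B * dim_row C" and j2: "j mod (dim_col B * dim_col C) < dim_col B * dim_col C"
    using i j by (simp_all add: mod_lt)
  show "kron (kron A B) C $$ (i,j) = kron A (kron B C) $$ (i,j)"
    using i j i1 j1 i2 j2 by (simp add: kron_index div_lt mod_lt e1 e2 e3 mult.assoc)
qed auto

lemma smult_smult: "a \<cdot>\<^sub>m (b \<cdot>\<^sub>m A) = (a * b) \<cdot>\<^sub>m (A :: complex mat)"
  by (rule eq_matI) auto
lemma one_smult: "1 \<cdot>\<^sub>m A = (A :: complex mat)"
  by (rule eq_matI) auto
lemma minus_one_smult: "(-1) \<cdot>\<^sub>m A = - (A :: complex mat)"
  by (rule eq_matI) auto
lemma smult_mult_smult: "A \<in> carrier_mat n m \<Longrightarrow> B \<in> carrier_mat m k \<Longrightarrow>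
   (a \<cdot>\<^sub>m A) * (b \<cdot>\<^sub>m B) = (a * b) \<cdot>\<^sub>m (A * B :: complex mat)"
proof -
  assume A: "A \<in> carrier_mat n m" and B: "B \<in> carrier_mat m k"
  have "(a \<cdot>\<^sub>m A) * (b \<cdot>\<^sub>m B) = b \<cdot>\<^sub>m ((a \<cdot>\<^sub>m A) * B)"
    by (rule mult_smult_distrib[of _ n m]) (use A B in auto)
  also have "(a \<cdot>\<^sub>m A) * B = a \<cdot>\<^sub>m (A * B)"
    by (rule mult_smult_assoc_mat[of _ n m]) (use A B in auto)
  finally show ?thesis by (simp add: smult_smult mult.commute)
qed

section \<open>Pauli strings\<close>
definition K :: "complex mat list \<Rightarrow> complex mat" where "K ps = foldr kron ps (1\<^sub>m 1)"
lemma K_Nil: "K [] = 1\<^sub>m 1" by (simp add: K_def)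
lemma K_Cons: "K (p # ps) = kron p (K ps)" by (simp add: K_def)
lemma K_carrier: "set ps \<subseteq> S \<Longrightarrow> K ps \<in> carrier_mat (2^length ps) (2^length ps)"
proof (induction ps)
  case Nil then show ?case by (simp add: K_Nil)
next
  case (Cons p ps)
  then have "kron p (K ps) \<in> carrier_mat (2 * 2^length ps) (2 * 2^length ps)"
    by (intro kron_carrier S_carrier) auto
  then show ?case by (simp add: K_Cons)
qed
lemma K_adj: "set ps \<subseteq> S \<Longrightarrow> mat_adjoint (K ps) = K ps"
  by (induction ps) (auto simp: K_Nil K_Cons kron_adj S_adj)
lemma K_sq: "set ps \<subseteq> S \<Longrightarrow> K ps * K ps = 1\<^sub>m (2^length ps)"
proof (induction ps)
  case Nil then show ?case by (simp add: K_Nil)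
next
  case (Cons p ps)
  have "K (p#ps) * K (p#ps) = kron (p * p) (K ps * K ps)"
    unfolding K_Cons by (rule kron_mult[OF S_carrier S_carrier K_carrier K_carrier]) (use Cons.prems in auto)
  also have "\<dots> = 1\<^sub>m (2^length (p#ps))" using Cons by (simp add: S_sq kron_one)
  finally show ?case .
qed
lemma K_mult: "set ps \<subseteq> S \<Longrightarrow> set qs \<subseteq> S \<Longrightarrow> length ps = length qs \<Longrightarrow>
  \<exists>c\<in>G. \<exists>rs. length rs = length ps \<and> set rs \<subseteq> S \<and> K ps * K qs = c \<cdot>\<^sub>m K rs"
proof (induction ps arbitrary: qs)
  case Nil then show ?case
    by (intro bexI[of _ 1] exI[of _ "[]"]) (auto simp: K_Nil one_smult G_def)
next
  case (Cons p ps)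
  then obtain q qs' where qs: "qs = q # qs'" by (cases qs) auto
  obtain c rs where c: "c \<in> G" "length rs = length ps" "set rs \<subseteq> S" "K ps * K qs' = c \<cdot>\<^sub>m K rs"
    using Cons.IH[of qs'] Cons.prems qs by auto
  from Cons qs obtain c0 d where d: "c0 \<in> G" "d \<in> S" "p * q = c0 \<cdot>\<^sub>m d" using S_mult by force
  have Kq: "K qs' \<in> carrier_mat (2^length ps) (2^length ps)"
    using K_carrier[of qs'] Cons.prems qs by auto
  have "K (p#ps) * K qs = kron (p * q) (K ps * K qs')"
    unfolding qs K_Cons by (rule kron_mult[OF S_carrier S_carrier K_carrier Kq]) (use Cons.prems qs in auto)
  also have "\<dots> = (c0 * c) \<cdot>\<^sub>m K (d # rs)"
    by (simp add: c d K_Cons kron_smult_l kron_smult_r smult_smult mult.commute)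
  finally show ?case using c d G_mult by (intro bexI[of _ "c0*c"] exI[of _ "d#rs"]) auto
qed
lemma K_comm: "set ps \<subseteq> S \<Longrightarrow> set qs \<subseteq> S \<Longrightarrow> length ps = length qs \<Longrightarrow>
  \<exists>s\<in>{1,-1}. K ps * K qs = s \<cdot>\<^sub>m (K qs * K ps)"
proof (induction ps arbitrary: qs)
  case Nil then show ?case
    by (intro bexI[of _ 1]) (auto simp: K_Nil one_smult)
next
  case (Cons p ps)
  then obtain q qs' where qs: "qs = q # qs'" by (cases qs) auto
  obtain s where s: "s \<in> {1,-1}" "K ps * K qs' = s \<cdot>\<^sub>m (K qs' * K ps)"
    using Cons.IH[of qs'] Cons.prems qs by auto
  have pq: "p \<in> S" "q \<in> S" using Cons.prems qs by auto
  obtain s0 where s0: "s0 \<in> {1,-1}" "p * q = s0 \<cdot>\<^sub>m (q * p)" using S_comm[OF pq] by blast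
  have Kq: "K qs' \<in> carrier_mat (2^length ps) (2^length ps)"
    using K_carrier[of qs'] Cons.prems qs by auto
  have Kp: "K ps \<in> carrier_mat (2^length ps) (2^length ps)"
    using K_carrier[of ps] Cons.prems by auto
  have e1: "K (p#ps) * K qs = kron (p * q) (K ps * K qs')"
    unfolding qs K_Cons by (rule kron_mult[OF S_carrier S_carrier Kp Kq]) (use pq in auto)
  have e2: "kron (q * p) (K qs' * K ps) = K qs * K (p#ps)"
    unfolding qs K_Cons by (rule kron_mult[OF S_carrier S_carrier Kq Kp, symmetric]) (use pq in auto)
  have "kron (p * q) (K ps * K qs') = (s0 * s) \<cdot>\<^sub>m kron (q * p) (K qs' * K ps)"
    unfolding s(2) s0(2) kron_smult_l kron_smult_r smult_smult by (simp add: mult.commute)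
  then have "K (p#ps) * K qs = (s0 * s) \<cdot>\<^sub>m (K qs * K (p#ps))" using e1 e2 by simp
  moreover have "s0 * s \<in> {1,-1}" using s s0 by auto
  ultimately show ?case by blast
qed
lemma K_append: "K (xs @ ys) = kron (K xs) (K ys)"
proof (induction xs)
  case Nil show ?case unfolding K_Nil append.simps by (rule kron_one_left[symmetric])
next
  case (Cons x xs) then show ?case by (simp add: K_Cons kron_assoc)
qed

lemma pauli_iff: "pauli t P \<longleftrightarrow> (\<exists>c ps. c \<in> G \<and> length ps = t \<and> set ps \<subseteq> S \<and> P = c \<cdot>\<^sub>m K ps)"
  by (simp add: pauli_def G_def S_def K_def)
lemma pauli_carrier: "pauli t P \<Longrightarrow> P \<in> carrier_mat (2^t) (2^t)"
  unfolding pauli_iff using K_carrier by (auto intro: smult_carrier_mat)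
lemma pauli_mult: assumes "pauli t P" "pauli t Q" shows "pauli t (P * Q)"
proof -
  obtain c ps where P: "c \<in> G" "length ps = t" "set ps \<subseteq> S" "P = c \<cdot>\<^sub>m K ps" using assms(1) pauli_iff by auto
  obtain d qs where Q: "d \<in> G" "length qs = t" "set qs \<subseteq> S" "Q = d \<cdot>\<^sub>m K qs" using assms(2) pauli_iff by auto
  obtain e rs where R: "e \<in> G" "length rs = t" "set rs \<subseteq> S" "K ps * K qs = e \<cdot>\<^sub>m K rs"
    using K_mult[of ps qs] P Q by auto
  have KP: "K ps \<in> carrier_mat (2^t) (2^t)" using K_carrier[of ps] P by simp
  have KQ: "K qs \<in> carrier_mat (2^t) (2^t)" using K_carrier[of qs] Q by simp
  have "P * Q = (c * d) \<cdot>\<^sub>m (K ps * K qs)" unfolding P(4) Q(4) by (rule smult_mult_smult[OF KP KQ])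
  also have "\<dots> = (c * d * e) \<cdot>\<^sub>m K rs" unfolding R(4) smult_smult by simp
  finally have "P * Q = (c * d * e) \<cdot>\<^sub>m K rs" .
  moreover have "c * d * e \<in> G" using P Q R G_mult by blast
  ultimately show ?thesis unfolding pauli_iff using R by blast
qed
lemma pauli_adj: assumes "pauli t P" shows "pauli t (mat_adjoint P)" "\<exists>s\<in>{1,-1}. mat_adjoint P = s \<cdot>\<^sub>m P"
  "P * mat_adjoint P = 1\<^sub>m (2^t)" "mat_adjoint P * P = 1\<^sub>m (2^t)"
proof -
  obtain c ps where P: "c \<in> G" "length ps = t" "set ps \<subseteq> S" "P = c \<cdot>\<^sub>m K ps" using assms(1) pauli_iff by auto
  have KP: "K ps \<in> carrier_mat (2^t) (2^t)" using K_carrier[of ps] P by simp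
  have KK: "K ps * K ps = 1\<^sub>m (2^t)" using K_sq[of ps] P by simp
  have A: "mat_adjoint P = cnj c \<cdot>\<^sub>m K ps" unfolding P(4) adj_smult K_adj[OF P(3)] ..
  then show "pauli t (mat_adjoint P)" unfolding pauli_iff using P G_cnj by blast
  obtain s where s: "s\<in>{1,-1}" "cnj c = s * c" using G_cnj_sign P by blast
  have "mat_adjoint P = s \<cdot>\<^sub>m P" unfolding A unfolding P(4) smult_smult s(2) ..
  then show "\<exists>s\<in>{1,-1}. mat_adjoint P = s \<cdot>\<^sub>m P" using s by blast
  have "P * mat_adjoint P = (c * cnj c) \<cdot>\<^sub>m (K ps * K ps)" unfolding A unfolding P(4) by (rule smult_mult_smult[OF KP KP])
  then show "P * mat_adjoint P = 1\<^sub>m (2^t)" unfolding KK G_cnj_mult[OF P(1)] one_smult .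
  have "mat_adjoint P * P = (cnj c * c) \<cdot>\<^sub>m (K ps * K ps)" unfolding A unfolding P(4) by (rule smult_mult_smult[OF KP KP])
  then show "mat_adjoint P * P = 1\<^sub>m (2^t)" unfolding KK G_cnj_mult'[OF P(1)] one_smult .
qed
lemma pauli_comm: assumes "pauli t P" "pauli t Q" shows "\<exists>s\<in>{1,-1}. P * Q = s \<cdot>\<^sub>m (Q * P)"
proof -
  obtain c ps where P: "c \<in> G" "length ps = t" "set ps \<subseteq> S" "P = c \<cdot>\<^sub>m K ps" using assms(1) pauli_iff by auto
  obtain d qs where Q: "d \<in> G" "length qs = t" "set qs \<subseteq> S" "Q = d \<cdot>\<^sub>m K qs" using assms(2) pauli_iff by auto
  obtain s where s: "s \<in> {1,-1}" "K ps * K qs = s \<cdot>\<^sub>m (K qs * K ps)"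
    using K_comm[of ps qs] P Q by auto
  have KP: "K ps \<in> carrier_mat (2^t) (2^t)" using K_carrier[of ps] P by simp
  have KQ: "K qs \<in> carrier_mat (2^t) (2^t)" using K_carrier[of qs] Q by simp
  have "P * Q = (c * d) \<cdot>\<^sub>m (K ps * K qs)" unfolding P(4) Q(4) by (rule smult_mult_smult[OF KP KQ])
  also have "\<dots> = s \<cdot>\<^sub>m ((d * c) \<cdot>\<^sub>m (K qs * K ps))" unfolding s(2) smult_smult by (simp add: mult.commute)
  also have "(d * c) \<cdot>\<^sub>m (K qs * K ps) = Q * P" unfolding P(4) Q(4) by (rule smult_mult_smult[OF KQ KP, symmetric])
  finally show ?thesis using s by blast
qed

section \<open>Qubit decomposition\<close>
lemma ar1: "(B::nat) > 0 \<Longrightarrow> r < B \<Longrightarrow> v < 2 \<Longrightarrow> (q*(2*B) + v*B + r) div B = 2*q + v"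
proof -
  assume B: "B > 0" and r: "r < B" and v: "v < 2"
  have "q*(2*B) + v*B + r = (2*q+v)*B + r" by (simp add: algebra_simps)
  then show ?thesis using B r by simp
qed
lemma ar2: "(B::nat) > 0 \<Longrightarrow> r < B \<Longrightarrow> v < 2 \<Longrightarrow> (q*(2*B) + v*B + r) div (2*B) = q"
proof -
  assume B: "B > 0" and r: "r < B" and v: "v < 2"
  have "v*B \<le> 1*B" using v by (intro mult_le_mono1) simp
  then have "v*B + r < 2*B" using r by linarith
  then show ?thesis using B by (simp add: add.assoc)
qed
lemma ar3: "(B::nat) > 0 \<Longrightarrow> r < B \<Longrightarrow> (q*(2*B) + v*B + r) mod B = r"
proof -
  assume B: "B > 0" and r: "r < B"
  have "q*(2*B) + v*B + r = (2*q+v)*B + r" by (simp add: algebra_simps)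
  then show ?thesis using B r by simp
qed
lemma ar5: "(a::nat) = (a div (2*B))*(2*B) + ((a div B) mod 2)*B + a mod B"
proof -
  have "a div B = (a div B div 2) * 2 + (a div B) mod 2" by simp
  then have "a = ((a div B div 2) * 2 + (a div B) mod 2) * B + a mod B" by (metis div_mult_mod_eq)
  also have "a div B div 2 = a div (2*B)" by (simp add: div_mult2_eq mult.commute)
  finally show ?thesis by (simp add: algebra_simps)
qed

definition qins :: "nat \<Rightarrow> nat \<Rightarrow> nat \<Rightarrow> nat \<Rightarrow> nat" where
  "qins t j v d = (d div 2^(t-1-j)) * (2 * 2^(t-1-j)) + v * 2^(t-1-j) + d mod 2^(t-1-j)"

lemma pow_tj: "j < t \<Longrightarrow> (2::nat)^(t-j) = 2 * 2^(t-1-j)"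
proof -
  assume "j < t" then have "t - j = Suc (t-1-j)" by arith
  then show ?thesis by simp
qed
lemma pow_t: "j < t \<Longrightarrow> (2::nat)^t = 2^j * (2 * 2^(t-1-j))"
proof -
  assume "j < t" then have "t = j + Suc (t-1-j)" by arith
  then have "(2::nat)^t = 2^(j + Suc (t-1-j))" by simp
  then show ?thesis by (simp only: power_add power_Suc)
qed
lemma pow_t1: "j < t \<Longrightarrow> (2::nat)^(t-1) = 2^j * 2^(t-1-j)"
proof -
  assume "j < t" then have "t - 1 = j + (t-1-j)" by arith
  then have "(2::nat)^(t-1) = 2^(j + (t-1-j))" by simp
  then show ?thesis by (simp only: power_add)
qed

lemma qbit_lt: "qbit t j a < 2" by (simp add: qbit_def)
lemma qdel_alt: "j < t \<Longrightarrow> qdel t j a = (a div (2 * 2^(t-1-j))) * 2^(t-1-j) + a mod 2^(t-1-j)"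
  by (simp add: qdel_def pow_tj)
lemma qdel_lt: assumes "j < t" "a < 2^t" shows "qdel t j a < 2^(t-1)"
proof -
  define B :: nat where "B = 2^(t-1-j)"
  have B: "B > 0" by (simp add: B_def)
  have q: "a div (2*B) < 2^j" using assms pow_t[OF assms(1)] by (simp add: B_def div_lt)
  have "qdel t j a = (a div (2*B)) * B + a mod B" using qdel_alt[OF assms(1)] by (simp add: B_def)
  also have "\<dots> < (a div (2*B)) * B + B" using B by simp
  also have "\<dots> = (a div (2*B) + 1) * B" by simp
  also have "\<dots> \<le> 2^j * B" using q by (intro mult_le_mono1) simp
  also have "\<dots> = 2^(t-1)" using pow_t1[OF assms(1)] by (simp add: B_def)
  finally show ?thesis .
qed
lemma qins_lt: assumes "j < t" "v < 2" "d < 2^(t-1)" shows "qins t j v d < 2^t"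
proof -
  define B :: nat where "B = 2^(t-1-j)"
  have B: "B > 0" by (simp add: B_def)
  have q: "d div B < 2^j" using assms pow_t1[OF assms(1)] by (simp add: B_def div_lt)
  have "v*B \<le> 1*B" using assms(2) by (intro mult_le_mono1) simp
  moreover have "d mod B < B" using B by simp
  ultimately have "v*B + d mod B < 2*B" by linarith
  moreover have "qins t j v d = (d div B) * (2*B) + v*B + d mod B" unfolding qins_def B_def ..
  ultimately have "qins t j v d < (d div B) * (2*B) + 2*B" by linarith
  also have "\<dots> = (d div B + 1) * (2*B)" by simp
  also have "\<dots> \<le> 2^j * (2*B)" using q by (intro mult_le_mono1) simp
  also have "\<dots> = 2^t" using pow_t[OF assms(1)] by (simp add: B_def)
  finally show ?thesis .
qed
lemma qbit_qins: assumes "j < t" "v < 2" shows "qbit t j (qins t j v d) = v"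
proof -
  define B :: nat where "B = 2^(t-1-j)"
  have B: "B > 0" by (simp add: B_def)
  have "qins t j v d div B = 2 * (d div B) + v" unfolding qins_def B_def[symmetric]
    using ar1[OF B _ assms(2)] B by simp
  then show ?thesis using assms by (simp add: qbit_def B_def)
qed
lemma qdel_qins: assumes "j < t" "v < 2" shows "qdel t j (qins t j v d) = d"
proof -
  define B :: nat where "B = 2^(t-1-j)"
  have B: "B > 0" by (simp add: B_def)
  have 1: "qins t j v d div (2*B) = d div B" unfolding qins_def B_def[symmetric]
    using ar2[OF B _ assms(2)] B by simp
  have 2: "qins t j v d mod B = d mod B" unfolding qins_def B_def[symmetric]
    using ar3[OF B] B by simp
  have qd: "qdel t j x = (x div (2*B))*B + x mod B" for x unfolding B_def by (rule qdel_alt[OF assms(1)])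
  show ?thesis unfolding qd 1 2 by simp
qed
lemma qins_qdel: assumes "j < t" shows "qins t j (qbit t j a) (qdel t j a) = a"
proof -
  define B :: nat where "B = 2^(t-1-j)"
  have B: "B > 0" by (simp add: B_def)
  have q: "qdel t j a = (a div (2*B)) * B + a mod B" using qdel_alt[OF assms(1)] by (simp add: B_def)
  have 1: "qdel t j a div B = a div (2*B)" using q B by simp
  have 2: "qdel t j a mod B = a mod B" using q B by simp
  have "qins t j (qbit t j a) (qdel t j a) = (a div (2*B))*(2*B) + ((a div B) mod 2)*B + a mod B"
    unfolding qins_def B_def[symmetric] 1 2 by (simp add: qbit_def B_def)
  then show ?thesis using ar5[of a B] by simp
qed

lemma sum_q: assumes "j < t" shows "(\<Sum>a<2^t. f a) = (\<Sum>v<2. \<Sum>d<2^(t-1). f (qins t j v d))"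
proof -
  have bij: "bij_betw (\<lambda>(v,d). qins t j v d) ({..<2} \<times> {..<2^(t-1)}) {..<2^t}"
  proof (rule bij_betwI[where g = "\<lambda>a. (qbit t j a, qdel t j a)"])
    show "(\<lambda>(v,d). qins t j v d) \<in> {..<2} \<times> {..<2^(t-1)} \<rightarrow> {..<2^t}"
      using qins_lt[OF assms] by auto
    show "(\<lambda>a. (qbit t j a, qdel t j a)) \<in> {..<2^t} \<rightarrow> {..<2} \<times> {..<2^(t-1)}"
      using qdel_lt[OF assms] qbit_lt by auto
    show "\<And>x. x \<in> {..<2} \<times> {..<2^(t-1)} \<Longrightarrow> (qbit t j (case x of (v, d) \<Rightarrow> qins t j v d), qdel t j (case x of (v, d) \<Rightarrow> qins t j v d)) = x"
      using qbit_qins[OF assms] qdel_qins[OF assms] by auto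
    show "\<And>y. y \<in> {..<2^t} \<Longrightarrow> (case (qbit t j y, qdel t j y) of (v, d) \<Rightarrow> qins t j v d) = y"
      using qins_qdel[OF assms] by auto
  qed
  have "(\<Sum>a<2^t. f a) = (\<Sum>x\<in>{..<2} \<times> {..<2^(t-1)}. f ((\<lambda>(v,d). qins t j v d) x))"
    by (rule sum.reindex_bij_betw[OF bij, symmetric])
  also have "\<dots> = (\<Sum>v<2. \<Sum>d<2^(t-1). f (qins t j v d))"
    by (simp add: sum.cartesian_product split_def)
  finally show ?thesis .
qed

definition E :: "nat \<Rightarrow> nat \<Rightarrow> complex mat \<Rightarrow> complex mat \<Rightarrow> complex mat" where
  "E t j m W = mat (2^t) (2^t) (\<lambda>(a,b). m $$ (qbit t j a, qbit t j b) * W $$ (qdel t j a, qdel t j b))"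

lemma E_carrier: "E t j m W \<in> carrier_mat (2^t) (2^t)"
  unfolding E_def by simp
lemma E_dims[simp]: "dim_row (E t j m W) = 2^t" "dim_col (E t j m W) = 2^t"
  unfolding E_def by simp_all
lemma E_index: "a < 2^t \<Longrightarrow> b < 2^t \<Longrightarrow> E t j m W $$ (a,b) = m $$ (qbit t j a, qbit t j b) * W $$ (qdel t j a, qdel t j b)"
  unfolding E_def by simp

lemma E_mult: assumes j: "j < t" and n1: "n1 \<in> carrier_mat 2 2" and n2: "n2 \<in> carrier_mat 2 2"
  and W1: "W1 \<in> carrier_mat (2^(t-1)) (2^(t-1))" and W2: "W2 \<in> carrier_mat (2^(t-1)) (2^(t-1))"
  shows "E t j n1 W1 * E t j n2 W2 = E t j (n1 * n2) (W1 * W2)"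
proof (rule eq_matI)
  fix a b assume "a < dim_row (E t j (n1 * n2) (W1 * W2))" "b < dim_col (E t j (n1 * n2) (W1 * W2))"
  then have a: "a < 2^t" and b: "b < 2^t" using E_carrier by auto
  have qa: "qbit t j a < 2" "qdel t j a < 2^(t-1)" using qbit_lt qdel_lt[OF j a] by auto
  have qb: "qbit t j b < 2" "qdel t j b < 2^(t-1)" using qbit_lt qdel_lt[OF j b] by auto
  have "(E t j n1 W1 * E t j n2 W2) $$ (a,b) = (\<Sum>c<2^t. E t j n1 W1 $$ (a,c) * E t j n2 W2 $$ (c,b))"
    using a b E_carrier[of t j] by (simp add: scalar_prod_def lessThan_atLeast0)
  also have "\<dots> = (\<Sum>v<2. \<Sum>d<2^(t-1). E t j n1 W1 $$ (a,qins t j v d) * E t j n2 W2 $$ (qins t j v d,b))"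
    by (rule sum_q[OF j])
  also have "\<dots> = (\<Sum>v<2. \<Sum>d<2^(t-1). (n1 $$ (qbit t j a, v) * n2 $$ (v, qbit t j b)) * (W1 $$ (qdel t j a, d) * W2 $$ (d, qdel t j b)))"
  proof (intro sum.cong refl)
    fix v d :: nat assume v: "v \<in> {..<2}" and d: "d \<in> {..<2^(t-1)}"
    have l: "qins t j v d < 2^t" using qins_lt[OF j] v d by auto
    show "E t j n1 W1 $$ (a,qins t j v d) * E t j n2 W2 $$ (qins t j v d,b) = (n1 $$ (qbit t j a, v) * n2 $$ (v, qbit t j b)) * (W1 $$ (qdel t j a, d) * W2 $$ (d, qdel t j b))"
      using v by (simp add: E_index a b l qbit_qins[OF j] qdel_qins[OF j])
  qed
  also have "\<dots> = (\<Sum>v<2. n1 $$ (qbit t j a, v) * n2 $$ (v, qbit t j b)) * (\<Sum>d<2^(t-1). W1 $$ (qdel t j a, d) * W2 $$ (d, qdel t j b))"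
    by (simp add: sum_product)
  also have "\<dots> = E t j (n1 * n2) (W1 * W2) $$ (a,b)"
    using a b qa qb n1 n2 W1 W2 by (simp add: E_index scalar_prod_def lessThan_atLeast0)
  finally show "(E t j n1 W1 * E t j n2 W2) $$ (a,b) = E t j (n1 * n2) (W1 * W2) $$ (a,b)" .
qed (use E_carrier in auto)

lemma E_adj: assumes j: "j < t" and m: "m \<in> carrier_mat 2 2" and W: "W \<in> carrier_mat (2^(t-1)) (2^(t-1))"
  shows "mat_adjoint (E t j m W) = E t j (mat_adjoint m) (mat_adjoint W)"
proof (rule eq_matI)
  fix a b assume "a < dim_row (E t j (mat_adjoint m) (mat_adjoint W))" "b < dim_col (E t j (mat_adjoint m) (mat_adjoint W))"
  then have a: "a < 2^t" and b: "b < 2^t" using E_carrier by auto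
  have qa: "qbit t j a < 2" "qdel t j a < 2^(t-1)" using qbit_lt qdel_lt[OF j a] by auto
  have qb: "qbit t j b < 2" "qdel t j b < 2^(t-1)" using qbit_lt qdel_lt[OF j b] by auto
  show "mat_adjoint (E t j m W) $$ (a,b) = E t j (mat_adjoint m) (mat_adjoint W) $$ (a,b)"
    using a b qa qb m W E_carrier[of t j m W] by (simp add: E_index)
qed (use E_carrier in auto)

lemma E_smult: assumes j: "j < t" and W: "W \<in> carrier_mat (2^(t-1)) (2^(t-1))"
  shows "c \<cdot>\<^sub>m E t j m W = E t j m (c \<cdot>\<^sub>m W)"
proof (rule eq_matI)
  fix a b assume "a < dim_row (E t j m (c \<cdot>\<^sub>m W))" "b < dim_col (E t j m (c \<cdot>\<^sub>m W))"
  then have a: "a < 2^t" and b: "b < 2^t" by auto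
  have qa: "qdel t j a < 2^(t-1)" "qdel t j b < 2^(t-1)" using qdel_lt[OF j a] qdel_lt[OF j b] by auto
  show "(c \<cdot>\<^sub>m E t j m W) $$ (a,b) = E t j m (c \<cdot>\<^sub>m W) $$ (a,b)"
    using a b qa W by (simp add: E_index)
qed auto

lemma kron_E: assumes L: "L \<in> carrier_mat (2^j) (2^j)" and p: "p \<in> carrier_mat 2 2"
  and R: "R \<in> carrier_mat (2^k) (2^k)" and t: "t = j + 1 + k"
  shows "kron L (kron p R) = E t j p (kron L R)"
proof -
  have j: "j < t" using t by simp
  have k: "t - 1 - j = k" using t by simp
  define B :: nat where "B = 2^k"
  have B: "B > 0" by (simp add: B_def)
  have tB: "(2::nat)^t = 2^j * (2 * B)" using pow_t[OF j] k by (simp add: B_def)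
  have t1B: "(2::nat)^(t-1) = 2^j * B" using pow_t1[OF j] k by (simp add: B_def)
  have qd: "qdel t j x = (x div (2*B))*B + x mod B" for x using qdel_alt[OF j] k by (simp add: B_def)
  have qb: "qbit t j x = x mod (2*B) div B" for x
  proof -
    have "qbit t j x = x div B mod 2" unfolding qbit_def k B_def ..
    also have "\<dots> = x mod (2*B) div B"
    proof -
      have "x mod (B*2) = B*(x div B mod 2) + x mod B" by (rule mod_mult2_eq)
      then show ?thesis using B by (simp add: mult.commute)
    qed
    finally show ?thesis .
  qed
  have d1: "qdel t j x div B = x div (2*B)" for x using B by (simp add: qd)
  have d2: "qdel t j x mod B = x mod B" for x using B by (simp add: qd)
  have d3: "x mod (2*B) mod B = x mod B" for x by (metis mod_mod_cancel dvd_triv_right)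
  show ?thesis
  proof (rule eq_matI)
    fix a b assume "a < dim_row (E t j p (kron L R))" "b < dim_col (E t j p (kron L R))"
    then have a: "a < 2^t" and b: "b < 2^t" by auto
    have a1: "a < 2^j * (2 * B)" and b1: "b < 2^j * (2*B)" using a b tB by auto
    have a2: "a mod (2*B) < 2 * B" "b mod (2*B) < 2*B" using B by auto
    have a3: "qdel t j a < 2^j * B" "qdel t j b < 2^j * B" using qdel_lt[OF j a] qdel_lt[OF j b] t1B by auto
    have "kron L (kron p R) $$ (a,b) = L $$ (a div (2*B), b div (2*B)) * (p $$ (a mod (2*B) div B, b mod (2*B) div B) * R $$ (a mod (2*B) mod B, b mod (2*B) mod B))"
      using a1 b1 a2 L p R by (simp add: kron_index B_def)
    also have "\<dots> = p $$ (qbit t j a, qbit t j b) * kron L R $$ (qdel t j a, qdel t j b)"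
      using a3 L p R by (simp add: kron_index B_def[symmetric] qb d1 d2 d3)
    also have "\<dots> = E t j p (kron L R) $$ (a,b)" using a b by (simp add: E_index)
    finally show "kron L (kron p R) $$ (a,b) = E t j p (kron L R) $$ (a,b)" .
  next
    show "dim_row (kron L (kron p R)) = dim_row (E t j p (kron L R))" using L p R tB by (simp add: B_def)
    show "dim_col (kron L (kron p R)) = dim_col (E t j p (kron L R))" using L p R tB by (simp add: B_def)
  qed
qed

lemma K_E: assumes "set ps \<subseteq> S" "j < length ps"
  shows "K ps = E (length ps) j (ps ! j) (K (take j ps @ drop (Suc j) ps))"
proof -
  have ps: "ps = take j ps @ (ps ! j) # drop (Suc j) ps" using assms(2) by (simp add: id_take_nth_drop)
  have st1: "set (take j ps) \<subseteq> S" using assms(1) set_take_subset by (rule order_trans[rotated])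
  have st2: "set (drop (Suc j) ps) \<subseteq> S" using assms(1) set_drop_subset by (rule order_trans[rotated])
  have st3: "ps ! j \<in> S" using assms nth_mem by blast
  note st = st1 st2 st3
  have "K (take j ps @ (ps ! j) # drop (Suc j) ps) = kron (K (take j ps)) (kron (ps ! j) (K (drop (Suc j) ps)))"
    unfolding K_append K_Cons ..
  then have "K ps = kron (K (take j ps)) (kron (ps ! j) (K (drop (Suc j) ps)))"
    using ps by simp
  also have "\<dots> = E (length ps) j (ps ! j) (kron (K (take j ps)) (K (drop (Suc j) ps)))"
    apply (rule kron_E[where k="length ps - Suc j"])
    using K_carrier[OF st(1)] K_carrier[OF st(2)] S_carrier[OF st(3)] assms(2) by auto
  also have "kron (K (take j ps)) (K (drop (Suc j) ps)) = K (take j ps @ drop (Suc j) ps)"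
    by (simp add: K_append)
  finally show ?thesis .
qed

lemma at_E: assumes j: "j < t" and W: "W \<in> carrier_mat (2^(t-1)) (2^(t-1))"
  shows "acts_trivially t (E t j (1\<^sub>m 2) W) j"
  unfolding acts_trivially_def
proof (intro exI[of _ W] conjI allI impI)
  show "W \<in> carrier_mat (2^(t-1)) (2^(t-1))" by (rule W)
  fix a b :: nat assume a: "a < 2^t" and b: "b < 2^t"
  show "E t j (1\<^sub>m 2) W $$ (a,b) = (if qbit t j a = qbit t j b then W $$ (qdel t j a, qdel t j b) else 0)"
    using a b qbit_lt[of t j a] qbit_lt[of t j b] by (simp add: E_index)
qed

lemma E_at: assumes j: "j < t" and C: "C \<in> carrier_mat (2^t) (2^t)" and at: "acts_trivially t C j"
  shows "\<exists>W. W \<in> carrier_mat (2^(t-1)) (2^(t-1)) \<and> C = E t j (1\<^sub>m 2) W"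
proof -
  obtain W where W: "W \<in> carrier_mat (2^(t-1)) (2^(t-1))"
    and e: "\<forall>a < 2^t. \<forall>b < 2^t. C $$ (a,b) = (if qbit t j a = qbit t j b then W $$ (qdel t j a, qdel t j b) else 0)"
    using at unfolding acts_trivially_def by blast
  have "C = E t j (1\<^sub>m 2) W"
  proof (rule eq_matI)
    fix a b assume "a < dim_row (E t j (1\<^sub>m 2) W)" "b < dim_col (E t j (1\<^sub>m 2) W)"
    then have a: "a < 2^t" and b: "b < 2^t" by auto
    show "C $$ (a,b) = E t j (1\<^sub>m 2) W $$ (a,b)"
      using e a b qbit_lt[of t j a] qbit_lt[of t j b] by (simp add: E_index)
  qed (use C in auto)
  then show ?thesis using W by blast
qed

section \<open>Controlled operators\<close>
lemma ctrl_idt: assumes A: "A \<in> carrier_mat (2^t) (2^t)" and B: "B \<in> carrier_mat (2^t) (2^t)"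
  shows "ctrl t A * idtensor t B = four_block_mat B (0\<^sub>m (2^t) (2^t)) (0\<^sub>m (2^t) (2^t)) (A * B)"
  unfolding ctrl_def idtensor_def
  by (subst mult_four_block_mat[OF one_carrier_mat zero_carrier_mat zero_carrier_mat A B zero_carrier_mat zero_carrier_mat B])
     (use A B in auto)
lemma blk_ctrl: assumes A: "A \<in> carrier_mat (2^t) (2^t)" and B: "B \<in> carrier_mat (2^t) (2^t)" and D: "D \<in> carrier_mat (2^t) (2^t)"
  shows "four_block_mat B (0\<^sub>m (2^t) (2^t)) (0\<^sub>m (2^t) (2^t)) D * ctrl t A = four_block_mat B (0\<^sub>m (2^t) (2^t)) (0\<^sub>m (2^t) (2^t)) (D * A)"
  unfolding ctrl_def
  by (subst mult_four_block_mat[OF B zero_carrier_mat zero_carrier_mat D one_carrier_mat zero_carrier_mat zero_carrier_mat A])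
     (use A B D in auto)

theorem proposition3:
  fixes t :: nat and C P :: "complex mat"
  assumes "psc t C" and "pauli t P"
  shows "\<exists>Q. pauli t Q \<and>
           ctrl t P * idtensor t C = ctrl t Q * idtensor t C * ctrl t P \<and>
           (Q * C = C * Q \<or> Q * C = - (C * Q)) \<and>
           Supp t Q \<subseteq> Supp t C"
proof -
  define n where "n = (2::nat)^t"
  have mc[simp]: "X * Y \<in> carrier_mat n n" if "X \<in> carrier_mat n n" "Y \<in> carrier_mat n n" for X Y :: "complex mat"
    by (rule mult_carrier_mat[OF that])
  have asc[simp]: "X * Y * Z = X * (Y * Z)" if "X \<in> carrier_mat n n" "Y \<in> carrier_mat n n" "Z \<in> carrier_mat n n" for X Y Z :: "complex mat"
    by (rule assoc_mult_mat[OF that])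
  define n' where "n' = (2::nat)^(t-1)"
  have mc'[simp]: "X * Y \<in> carrier_mat n' n'" if "X \<in> carrier_mat n' n'" "Y \<in> carrier_mat n' n'" for X Y :: "complex mat"
    by (rule mult_carrier_mat[OF that])
  have cl: "clifford t C" and pCC: "pauli t (C * C)" using assms(1) unfolding psc_def by auto
  have C: "C \<in> carrier_mat n n" and CCa: "C * mat_adjoint C = 1\<^sub>m n"
    using cl unfolding clifford_def unitary_op_def n_def by auto
  have cliff: "\<And>X. pauli t X \<Longrightarrow> pauli t (C * X * mat_adjoint C)" using cl unfolding clifford_def by auto
  define Ca where "Ca = mat_adjoint C"
  have Ca: "Ca \<in> carrier_mat n n" using C by (simp add: Ca_def)
  have CCa': "C * Ca = 1\<^sub>m n" using CCa by (simp add: Ca_def)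
  have CaC: "Ca * C = 1\<^sub>m n" by (rule mat_mult_left_right_inverse[OF C Ca CCa'])
  have P: "P \<in> carrier_mat n n" using pauli_carrier[OF assms(2)] by (simp add: n_def)
  define Pa where "Pa = mat_adjoint P"
  have Pa: "Pa \<in> carrier_mat n n" using P by (simp add: Pa_def)
  have pPa: "pauli t Pa" using pauli_adj(1)[OF assms(2)] by (simp add: Pa_def)
  have PPa: "P * Pa = 1\<^sub>m n" and PaP: "Pa * P = 1\<^sub>m n"
    using pauli_adj(3,4)[OF assms(2)] by (simp_all add: Pa_def n_def)
  define Q where "Q = P * C * Pa * Ca"
  have Q: "Q \<in> carrier_mat n n" using P C Pa Ca by (simp add: Q_def)
  have pQ: "pauli t Q"
  proof -
    have "pauli t (C * Pa * Ca)" using cliff[OF pPa] by (simp add: Ca_def)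
    then have "pauli t (P * (C * Pa * Ca))" by (rule pauli_mult[OF assms(2)])
    then show ?thesis using P C Pa Ca by (simp add: Q_def)
  qed
  have cancel1: "Ca * (C * X) = X" if "X \<in> carrier_mat n m" for X m
    using that C Ca CaC by (simp flip: assoc_mult_mat[OF Ca C that])
  have cancel2: "Pa * (P * X) = X" if "X \<in> carrier_mat n m" for X m
    using that P Pa PaP by (simp flip: assoc_mult_mat[OF Pa P that])
  have cancel3: "C * (Ca * X) = X" if "X \<in> carrier_mat n m" for X m
    using that C Ca CCa' by (simp flip: assoc_mult_mat[OF C Ca that])

  have QCP: "Q * C * P = P * C"
  proof -
    have "Q * C * P = P * (C * (Pa * (Ca * (C * P))))" using P C Pa Ca by (simp add: Q_def)
    also have "\<dots> = P * (C * (Pa * P))" using P by (simp add: cancel1)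
    also have "\<dots> = P * C" using P C by (simp add: PaP)
    finally show ?thesis .
  qed
  have ctrl_eq: "ctrl t P * idtensor t C = ctrl t Q * idtensor t C * ctrl t P"
  proof -
    have "ctrl t Q * idtensor t C * ctrl t P = four_block_mat C (0\<^sub>m n n) (0\<^sub>m n n) (Q * C * P)"
      using ctrl_idt[of Q t C] blk_ctrl[of P t C "Q * C"] P C Q by (simp add: n_def)
    also have "\<dots> = ctrl t P * idtensor t C"
      using ctrl_idt[of P t C] P C by (simp add: n_def QCP)
    finally show ?thesis by simp
  qed

  define S2 where "S2 = C * C"
  define S2a where "S2a = mat_adjoint S2"
  have S2a_eq: "S2a = Ca * Ca" unfolding S2a_def S2_def Ca_def by (rule adj_mult[OF C C])
  have pS2a: "pauli t S2a" using pauli_adj(1)[OF pCC] by (simp add: S2a_def S2_def)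
  have S2aS2: "S2a * S2 = 1\<^sub>m n" using pauli_adj(4)[OF pCC] by (simp add: S2a_def S2_def n_def)
  define R' where "R' = C * P * Ca"
  have R': "R' \<in> carrier_mat n n" using C P Ca by (simp add: R'_def)
  have pR': "pauli t R'" using cliff[OF assms(2)] by (simp add: R'_def Ca_def)
  obtain s1 where s1: "s1 \<in> {1,-1}" "S2a * R' = s1 \<cdot>\<^sub>m (R' * S2a)" using pauli_comm[OF pS2a pR'] by blast
  have S2: "S2 \<in> carrier_mat n n" and S2a: "S2a \<in> carrier_mat n n" using C Ca by (simp_all add: S2_def S2a_eq)
  have A1: "Ca * P * C = S2a * R' * S2"
  proof -
    have "S2a * R' * S2 = Ca * (Ca * (C * (P * (Ca * (C * C)))))"
      using C Ca P by (simp add: S2a_eq R'_def S2_def)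
    also have "\<dots> = Ca * (P * C)" using C P cancel1[of "P * C" n] cancel1[of C n] by simp
    finally show ?thesis using C Ca P by simp
  qed
  have A2: "S2a * R' * S2 = s1 \<cdot>\<^sub>m R'"
  proof -
    have "S2a * R' * S2 = (s1 \<cdot>\<^sub>m (R' * S2a)) * S2" by (simp add: s1(2))
    also have "\<dots> = s1 \<cdot>\<^sub>m (R' * S2a * S2)" using R' S2a S2 by (simp add: mult_smult_assoc_mat[of _ n n])
    also have "R' * S2a * S2 = R'" using R' S2a S2 by (simp add: S2aS2)
    finally show ?thesis .
  qed
  define Qa where "Qa = mat_adjoint Q"
  have Qa_eq: "Qa = C * (P * (Ca * Pa))"
  proof -
    have "Qa = mat_adjoint Ca * mat_adjoint (P * C * Pa)" unfolding Qa_def Q_def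
      by (rule adj_mult[of _ n n _ n]) (use P C Pa Ca in auto)
    also have "mat_adjoint (P * C * Pa) = mat_adjoint Pa * mat_adjoint (P * C)"
      by (rule adj_mult[of _ n n _ n]) (use P C Pa in auto)
    also have "mat_adjoint (P * C) = mat_adjoint C * mat_adjoint P"
      by (rule adj_mult[of _ n n _ n]) (use P C in auto)
    finally show ?thesis using P C Pa Ca by (simp add: Ca_def Pa_def)
  qed
  obtain s2 where s2: "s2 \<in> {1,-1}" "Qa = s2 \<cdot>\<^sub>m Q" using pauli_adj(2)[OF pQ] by (auto simp: Qa_def)
  have X: "Ca * (Q * C) = (s1 * s2) \<cdot>\<^sub>m Q"
  proof -
    have "Ca * (Q * C) = (Ca * P * C) * Pa" using P C Pa Ca by (simp add: Q_def CaC right_mult_one_mat[OF Pa])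
    also have "\<dots> = (s1 \<cdot>\<^sub>m R') * Pa" using A1 A2 by simp
    also have "\<dots> = s1 \<cdot>\<^sub>m (R' * Pa)" using R' Pa by (simp add: mult_smult_assoc_mat[of _ n n])
    also have "R' * Pa = Qa" using C P Ca Pa by (simp add: R'_def Qa_eq)
    finally show ?thesis using s2 by (simp add: smult_smult)
  qed
  have comm: "Q * C = (s1 * s2) \<cdot>\<^sub>m (C * Q)"
  proof -
    have "Q * C = C * (Ca * (Q * C))" using cancel3[of "Q * C" n] Q C by simp
    also have "\<dots> = C * ((s1 * s2) \<cdot>\<^sub>m Q)" by (simp add: X)
    also have "\<dots> = (s1 * s2) \<cdot>\<^sub>m (C * Q)" using C Q by (simp add: mult_smult_distrib[of _ n n])
    finally show ?thesis .
  qed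
  have comm': "Q * C = C * Q \<or> Q * C = - (C * Q)"
    using comm s1(1) s2(1) by (auto simp: one_smult minus_one_smult)

  have supp: "Supp t Q \<subseteq> Supp t C"
  proof
    fix j assume "j \<in> Supp t Q"
    then have j: "j < t" and nQ: "\<not> acts_trivially t Q j" unfolding Supp_def by auto
    show "j \<in> Supp t C"
    proof (rule ccontr)
      assume "j \<notin> Supp t C"
      then have "acts_trivially t C j" using j unfolding Supp_def by auto
      then obtain C' where C': "C' \<in> carrier_mat (2^(t-1)) (2^(t-1))" "C = E t j (1\<^sub>m 2) C'"
        using E_at[OF j] C by (auto simp: n_def)
      obtain c ps where cp: "c \<in> G" "length ps = t" "set ps \<subseteq> S" "P = c \<cdot>\<^sub>m K ps"
        using assms(2) pauli_iff by auto
      define p where "p = ps ! j"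
      define K' where "K' = K (take j ps @ drop (Suc j) ps)"
      have p: "p \<in> S" using cp j nth_mem[of j ps] by (auto simp: p_def)
      have pc: "p \<in> carrier_mat 2 2" using S_carrier[OF p] .
      have K': "K' \<in> carrier_mat (2^(t-1)) (2^(t-1))"
      proof -
        have "set (take j ps @ drop (Suc j) ps) \<subseteq> S" using cp(3) set_take_subset set_drop_subset by fastforce
        moreover have "length (take j ps @ drop (Suc j) ps) = t - 1" using cp(2) j by simp
        ultimately show ?thesis unfolding K'_def using K_carrier by metis
      qed
      define W where "W = c \<cdot>\<^sub>m K'"
      have W: "W \<in> carrier_mat (2^(t-1)) (2^(t-1))" using K' by (simp add: W_def)
      have PE: "P = E t j p W"
        using cp K_E[OF cp(3), of j] j E_smult[OF j K'] by (simp add: p_def K'_def W_def)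
      have PaE: "Pa = E t j p (mat_adjoint W)"
        unfolding Pa_def PE using E_adj[OF j pc W] S_adj[OF p] by simp
      have CaE: "Ca = E t j (1\<^sub>m 2) (mat_adjoint C')"
        unfolding Ca_def C'(2) using E_adj[OF j _ C'(1), of "1\<^sub>m 2"] by simp
      have one2: "(1\<^sub>m 2 :: complex mat) \<in> carrier_mat 2 2" by simp
      have adjW: "mat_adjoint W \<in> carrier_mat (2^(t-1)) (2^(t-1))" using W by simp
      have adjC': "mat_adjoint C' \<in> carrier_mat (2^(t-1)) (2^(t-1))" using C'(1) by simp
      have W': "W \<in> carrier_mat n' n'" "C' \<in> carrier_mat n' n'" "mat_adjoint W \<in> carrier_mat n' n'" "mat_adjoint C' \<in> carrier_mat n' n'"
        using W C'(1) adjW adjC' by (simp_all add: n'_def)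
      have Em: "E t j a X * E t j b Y = E t j (a * b) (X * Y)"
        if "a \<in> carrier_mat 2 2" "b \<in> carrier_mat 2 2" "X \<in> carrier_mat n' n'" "Y \<in> carrier_mat n' n'" for a b X Y
        using E_mult[OF j] that unfolding n'_def by blast
      have mc2: "X * Y \<in> carrier_mat 2 2" if "X \<in> carrier_mat 2 2" "Y \<in> carrier_mat 2 2" for X Y :: "complex mat"
        by (rule mult_carrier_mat[OF that])
      have "Q = E t j (p * 1\<^sub>m 2 * p * 1\<^sub>m 2) (W * C' * mat_adjoint W * mat_adjoint C')"
        unfolding Q_def PE C'(2) PaE CaE
        by (simp only: Em mc2 mc' W' pc one2)
      also have "p * 1\<^sub>m 2 * p * 1\<^sub>m 2 = 1\<^sub>m 2" using pc S_sq[OF p] by simp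
      finally have "Q = E t j (1\<^sub>m 2) (W * C' * mat_adjoint W * mat_adjoint C')" .
      moreover have "W * C' * mat_adjoint W * mat_adjoint C' \<in> carrier_mat (2^(t-1)) (2^(t-1))"
        using W' mc' unfolding n'_def[symmetric] by simp
      ultimately have "acts_trivially t Q j" using at_E[OF j] by simp
      then show False using nQ by simp
    qed
  qed
  show ?thesis using pQ ctrl_eq comm' supp by blast
qed
end
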